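(* Let $X\subset\mathbb{R}^N$ and $Y\subset\mathbb{R}^M$ be nondegenerate closed sets and $f:X\to Y$ a homeomorphism. If $p$ is a local cut-point of $X$, then $f(p)$ is a local cut-point of $Y$.
   Context: For a closed set $X\subset\mathbb{R}^N$, $x_0\in X$ and $r>0$, let $C_X(x_0,r)$ denote the connected component of $\overline{B}(x_0,r)\cap X$ containing $x_0$. A point $x_0\in X$ is a local cut-point of $X$ if there exists $r>0$ such that $C_X(x_0,r)\setminus\{x_0\}$ is not connected. *)

theory Defs
  imports "HOL-Analysis.Analysis"
begin

definition comp_ball :: "'a::euclidean_space set \<Rightarrow> 'a \<Rightarrow> real \<Rightarrow> 'a set" where
  "comp_ball X x0 r = connected_component_set (cball x0 r \<inter> X) x0"

definition local_cut_point :: "'a::euclidean_space set \<Rightarrow> 'a \<Rightarrow> bool" where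
  "local_cut_point X x0 \<longleftrightarrow> x0 \<in> X \<and>
     (\<exists>r>0. \<not> connected (comp_ball X x0 r - {x0}))"

definition nondegenerate :: "'a set \<Rightarrow> bool" where
  "nondegenerate X \<longleftrightarrow> (\<exists>x\<in>X. \<exists>y\<in>X. x \<noteq> y)"

end

theory Submission
  imports Defs
begin

lemma side_continuum:
  fixes K :: "'b::euclidean_space set"
  assumes cK: "compact K" and coK: "connected K" and qK: "q \<in> K"
    and oT: "openin (top_of_set (K-{q})) T" and cT: "closedin (top_of_set (K-{q})) T"
    and Tne: "T \<noteq> {}" and e: "e > 0"
  shows "\<exists>D. connected D \<and> q \<in> D \<and> D \<subseteq> K \<inter> cball q e \<and> D \<inter> T \<noteq> {}"
proof -
  let ?S = "insert q T"
  have TK: "T \<subseteq> K - {q}" using oT openin_imp_subset by blast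
  have conS: "connected ?S"
    using connected_Un_clopen_in_complement[of "{q}" K T] coK qK oT cT by auto
  obtain F where F: "closed F" "T = (K - {q}) \<inter> F" using cT closedin_closed by blast
  have "?S = K \<inter> (F \<union> {q})" using F qK by auto
  moreover have "closed (F \<union> {q})" using F by (simp add: closed_Un)
  ultimately have cS: "compact ?S" using cK compact_Int_closed[of K "F \<union> {q}"] by simp
  let ?X = "top_of_set ?S"
  have "compact_space ?X" using cS by (simp add: compact_space_subtopology)
  then have lc: "locally_compact_space ?X" by (simp add: compact_imp_locally_compact_space)
  have hs: "Hausdorff_space ?X" by (simp add: Hausdorff_space_subtopology)
  have cs: "connected_space ?X" using conS by (simp add: connected_space_subtopology)
  have c1: "compactin ?X {q}" by (simp add: compactin_subtopology)
  have c2: "connectedin ?X {q}" by (simp add: connectedin_subtopology)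
  have c3: "{q} \<noteq> topspace ?X" using Tne TK by auto
  have U: "openin ?X (?S \<inter> ball q e)" by (simp add: openin_open_Int)
  have qU: "{q} \<subseteq> ?S \<inter> ball q e" using e by simp
  obtain D where D: "compactin ?X D" "connectedin ?X D" "{q} \<subset> D" "D \<subset> ?S \<inter> ball q e"
    using intermediate_continuum_exists[OF cs lc hs c1 c2 _ c3 U qU] by blast
  have "connected D" using D(2) by (simp add: connectedin_subtopology)
  moreover have "q \<in> D" using D(3) by blast
  moreover have "D \<subseteq> K \<inter> cball q e" using D(4) TK qK by auto
  moreover have "D \<inter> T \<noteq> {}" using D(3,4) by blast
  ultimately show ?thesis by blast
qed

theorem lemma2p7:
  fixes X :: "'a::euclidean_space set" and Y :: "'b::euclidean_space set"
    and f :: "'a \<Rightarrow> 'b" and p :: 'a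
  assumes "closed X" and "closed Y"
    and "nondegenerate X" and "nondegenerate Y"
    and "\<exists>g. homeomorphism X Y f g"
    and "local_cut_point X p"
  shows "local_cut_point Y (f p)"
proof -
  obtain g where h: "homeomorphism X Y f g" using assms(5) by blast
  have fY: "f ` X = Y" and gX: "g ` Y = X" and gf: "\<And>x. x \<in> X \<Longrightarrow> g (f x) = x"
    and fg: "\<And>y. y \<in> Y \<Longrightarrow> f (g y) = y" and cf: "continuous_on X f" and cg: "continuous_on Y g"
    using h by (auto simp: homeomorphism_def)
  obtain r where pX: "p \<in> X" and r: "r > 0" and nc: "\<not> connected (comp_ball X p r - {p})"
    using assms(6) unfolding local_cut_point_def by blast
  define K where "K = comp_ball X p r"
  define q where "q = f p"
  have qY: "q \<in> Y" using pX fY q_def by blast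
  have KX: "K \<subseteq> cball p r \<inter> X" unfolding K_def comp_ball_def by (rule connected_component_subset)
  have pK: "p \<in> K" unfolding K_def comp_ball_def using pX r by simp
  have cK: "compact K"
  proof -
    have "compact (cball p r \<inter> X)" using assms(1) by (simp add: compact_Int_closed)
    moreover have "closed K" unfolding K_def comp_ball_def
      by (rule closed_connected_component) (simp add: assms(1) closed_Int)
    ultimately have "compact ((cball p r \<inter> X) \<inter> K)" by (rule compact_Int_closed)
    moreover have "(cball p r \<inter> X) \<inter> K = K" using KX by blast
    ultimately show ?thesis by simp
  qed
  have coK: "connected K" unfolding K_def comp_ball_def by simp
  define K' where "K' = f ` K"
  have cK': "compact K'" unfolding K'_def
    using cK KX continuous_on_subset[OF cf] compact_continuous_image by blast
  have coK': "connected K'" unfolding K'_def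
    using coK KX continuous_on_subset[OF cf] connected_continuous_image by blast
  have qK': "q \<in> K'" using pK K'_def q_def by blast
  have K'Y: "K' \<subseteq> Y" using KX fY K'_def by auto
  have ncK': "\<not> connected (K' - {q})"
  proof
    assume "connected (K' - {q})"
    then have "connected (g ` (K' - {q}))"
      using K'Y continuous_on_subset[OF cg] connected_continuous_image by blast
    moreover have "g ` (K' - {q}) = K - {p}"
    proof
      show "g ` (K' - {q}) \<subseteq> K - {p}"
      proof
        fix x assume "x \<in> g ` (K' - {q})"
        then obtain z where z: "z \<in> K" "f z \<noteq> f p" "x = g (f z)" unfolding K'_def q_def by blast
        then have "z \<in> X" using KX by blast
        then show "x \<in> K - {p}" using z gf by auto
      qed
      show "K - {p} \<subseteq> g ` (K' - {q})"
      proof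
        fix x assume x: "x \<in> K - {p}"
        have xX: "x \<in> X" using x KX by blast
        have "f x \<noteq> f p"
        proof
          assume "f x = f p"
          then have "g (f x) = g (f p)" by simp
          then show False using gf xX pX x by simp
        qed
        then have "f x \<in> K' - {q}" using x unfolding K'_def q_def by blast
        moreover have "x = g (f x)" using gf xX by simp
        ultimately show "x \<in> g ` (K' - {q})" by blast
      qed
    qed
    ultimately show False using nc K_def by simp
  qed
  then obtain T where oT: "openin (top_of_set (K'-{q})) T" and cT: "closedin (top_of_set (K'-{q})) T"
    and Tne: "T \<noteq> {}" and TK: "T \<noteq> K' - {q}"
    unfolding connected_clopen by blast
  define T2 where "T2 = (K' - {q}) - T"
  have oT2: "openin (top_of_set (K'-{q})) T2" unfolding T2_def using cT by (simp add: openin_diff)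
  have cT2: "closedin (top_of_set (K'-{q})) T2" unfolding T2_def using oT by (simp add: closedin_diff)
  have T2ne: "T2 \<noteq> {}" unfolding T2_def using TK oT openin_imp_subset by blast
  obtain s where s: "s > 0" and sg: "\<And>y. y \<in> Y \<Longrightarrow> dist y q < s \<Longrightarrow> dist (g y) p < r"
  proof -
    have gq: "g q = p" using gf pX q_def by simp
    from cg qY r obtain d where "d > 0" "\<forall>y\<in>Y. dist y q < d \<longrightarrow> dist (g y) (g q) < r"
      unfolding continuous_on_iff by blast
    then show ?thesis using that gq by auto
  qed
  define C where "C = comp_ball Y q (s/2)"
  have CY: "C \<subseteq> cball q (s/2) \<inter> Y" unfolding C_def comp_ball_def by (rule connected_component_subset)
  have coC: "connected C" unfolding C_def comp_ball_def by simp
  have CK': "C \<subseteq> K'"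
  proof -
    have "connected (g ` C)" using coC CY continuous_on_subset[OF cg] connected_continuous_image by blast
    moreover have "g ` C \<subseteq> cball p r \<inter> X"
    proof
      fix x assume "x \<in> g ` C"
      then obtain y where y: "y \<in> C" "x = g y" by blast
      then have "y \<in> Y" "dist y q < s" using CY s by (auto simp: dist_commute)
      then have "dist (g y) p < r" using sg by blast
      then show "x \<in> cball p r \<inter> X" using y gX \<open>y \<in> Y\<close> by (auto simp: dist_commute)
    qed
    moreover have "p \<in> g ` C"
    proof -
      have "q \<in> C" unfolding C_def comp_ball_def using qY s by simp
      then show ?thesis using gf pX q_def by force
    qed
    ultimately have "g ` C \<subseteq> K" unfolding K_def comp_ball_def
      by (meson connected_component_maximal)
    then have "f ` g ` C \<subseteq> K'" unfolding K'_def by blast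
    moreover have "f ` g ` C = C"
    proof -
      have "f ` g ` C = (\<lambda>y. f (g y)) ` C" by (simp add: image_image)
      also have "\<dots> = C"
      proof (rule set_eqI)
        fix y show "y \<in> (\<lambda>y. f (g y)) ` C \<longleftrightarrow> y \<in> C"
        proof
          assume "y \<in> (\<lambda>y. f (g y)) ` C"
          then obtain z where "z \<in> C" "y = f (g z)" by blast
          then show "y \<in> C" using CY fg by auto
        next
          assume y: "y \<in> C"
          then have "y = f (g y)" using CY fg by auto
          then show "y \<in> (\<lambda>y. f (g y)) ` C" using y by blast
        qed
      qed
      finally show ?thesis .
    qed
    ultimately show ?thesis by simp
  qed
  have meets: "C \<inter> U \<noteq> {}" if u1: "openin (top_of_set (K'-{q})) U" and u2: "closedin (top_of_set (K'-{q})) U" and u3: "U \<noteq> {}" for U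
  proof -
    obtain D where D: "connected D" "q \<in> D" "D \<subseteq> K' \<inter> cball q (s/2)" "D \<inter> U \<noteq> {}"
      using side_continuum[OF cK' coK' qK' u1 u2 u3, of "s/2"] s by auto
    have "D \<subseteq> C" unfolding C_def comp_ball_def using D K'Y
      by (intro connected_component_maximal) auto
    then show ?thesis using D by blast
  qed
  have m1: "C \<inter> T \<noteq> {}" using meets oT cT Tne by blast
  have m2: "C \<inter> T2 \<noteq> {}" using meets oT2 cT2 T2ne by blast
  have "\<not> connected (C - {q})"
  proof
    assume con: "connected (C - {q})"
    obtain Op where O: "open Op" "T = (K' - {q}) \<inter> Op" using oT openin_open by blast
    obtain F where F: "closed F" "T = (K' - {q}) \<inter> F" using cT closedin_closed by blast
    have "(C - {q}) \<inter> T = (C - {q}) \<inter> Op" using O CK' by auto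
    then have o: "openin (top_of_set (C - {q})) ((C - {q}) \<inter> T)" using O by (simp add: openin_open_Int)
    have "(C - {q}) \<inter> T = (C - {q}) \<inter> F" using F CK' by auto
    then have c: "closedin (top_of_set (C - {q})) ((C - {q}) \<inter> T)" using F by (simp add: closedin_closed_Int)
    have "(C - {q}) \<inter> T = {} \<or> (C - {q}) \<inter> T = C - {q}"
      using con o c unfolding connected_clopen by blast
    moreover have "(C - {q}) \<inter> T \<noteq> {}" using m1 oT openin_imp_subset by blast
    moreover have "(C - {q}) \<inter> T \<noteq> C - {q}" using m2 T2_def by blast
    ultimately show False by blast
  qed
  moreover have "s/2 > 0" using s by simp
  ultimately have "\<exists>r>0. \<not> connected (comp_ball Y q r - {q})" unfolding C_def by blast
  then show ?thesis unfolding local_cut_point_def using qY q_def by blast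
qed

end
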